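(* Let $H$ be a complex separable Hilbert space and let $T\in\mathcal{B}(H)$ be idempotent, i.e. $T^2=T$. If $T\in\mathcal{AN}(H)$, then $T+T^*-I\in\mathcal{AN}(H)$.
   Context: Throughout, Hilbert spaces are infinite dimensional. $\mathcal{B}(H)$ denotes bounded linear operators on $H$. $S\in\mathcal{B}(H)$ is norm attaining if $\|Sx\|=\|S\|$ for some unit vector $x$; $S\in\mathcal{AN}(H)$ (absolutely norm attaining) if for every nonzero closed subspace $M\subseteq H$ the restriction $S|_M:M\to H$ is norm attaining. *)

theory Defs
  imports "HOL-Analysis.Analysis"
begin

text \<open>A complex Hilbert space is modelled as a
real Banach space type 'a (class banach: norm, topology, completeness) equipped with a complex
scalar multiplication scC extending scaleR and a complex inner product ip (linear in the first
argument, conjugate symmetric) inducing the norm.\<close>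

definition complex_hilbert :: "(complex \<Rightarrow> 'a::banach \<Rightarrow> 'a) \<Rightarrow> ('a \<Rightarrow> 'a \<Rightarrow> complex) \<Rightarrow> bool" where
  "complex_hilbert scC ip \<longleftrightarrow>
     (\<forall>a b x. scC (a + b) x = scC a x + scC b x) \<and>
     (\<forall>a x y. scC a (x + y) = scC a x + scC a y) \<and>
     (\<forall>a b x. scC (a * b) x = scC a (scC b x)) \<and>
     (\<forall>r x. scC (complex_of_real r) x = scaleR r x) \<and>
     (\<forall>x y z. ip (x + y) z = ip x z + ip y z) \<and>
     (\<forall>a x y. ip (scC a x) y = a * ip x y) \<and>
     (\<forall>x y. ip y x = cnj (ip x y)) \<and>
     (\<forall>x. ip x x = complex_of_real ((norm x)\<^sup>2))"

definition separable_type :: "'a::topological_space itself \<Rightarrow> bool" where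
  "separable_type _ \<longleftrightarrow> (\<exists>D::'a set. countable D \<and> closure D = UNIV)"

definition infinite_dim_complex :: "(complex \<Rightarrow> 'a::banach \<Rightarrow> 'a) \<Rightarrow> bool" where
  "infinite_dim_complex scC \<longleftrightarrow>
     \<not> (\<exists>S::'a set. finite S \<and> (\<forall>x. \<exists>c. x = (\<Sum>s\<in>S. scC (c s) s)))"

definition bounded_clinear_op :: "(complex \<Rightarrow> 'a::banach \<Rightarrow> 'a) \<Rightarrow> ('a \<Rightarrow> 'a) \<Rightarrow> bool" where
  "bounded_clinear_op scC T \<longleftrightarrow> bounded_linear T \<and> (\<forall>c x. T (scC c x) = scC c (T x))"

definition is_adjoint :: "('a \<Rightarrow> 'a \<Rightarrow> complex) \<Rightarrow> ('a \<Rightarrow> 'a) \<Rightarrow> ('a \<Rightarrow> 'a) \<Rightarrow> bool" where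
  "is_adjoint ip T S \<longleftrightarrow> (\<forall>x y. ip (T x) y = ip x (S y))"

definition closed_csubspace :: "(complex \<Rightarrow> 'a::banach \<Rightarrow> 'a) \<Rightarrow> 'a set \<Rightarrow> bool" where
  "closed_csubspace scC M \<longleftrightarrow> closed M \<and> 0 \<in> M \<and> (\<forall>x\<in>M. \<forall>y\<in>M. x + y \<in> M) \<and>
     (\<forall>c. \<forall>x\<in>M. scC c x \<in> M)"

definition restr_norm :: "('a::real_normed_vector \<Rightarrow> 'a) \<Rightarrow> 'a set \<Rightarrow> real" where
  "restr_norm S M = (SUP x\<in>{x\<in>M. norm x \<le> 1}. norm (S x))"

definition norm_attaining_on :: "('a::real_normed_vector \<Rightarrow> 'a) \<Rightarrow> 'a set \<Rightarrow> bool" where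
  "norm_attaining_on S M \<longleftrightarrow> (\<exists>x\<in>M. norm x = 1 \<and> norm (S x) = restr_norm S M)"

definition abs_norm_attaining :: "(complex \<Rightarrow> 'a::banach \<Rightarrow> 'a) \<Rightarrow> ('a \<Rightarrow> 'a) \<Rightarrow> bool" where
  "abs_norm_attaining scC S \<longleftrightarrow>
     (\<forall>M. closed_csubspace scC M \<and> M \<noteq> {0} \<longrightarrow> norm_attaining_on S M)"

end

theory Submission
  imports Defs
begin


locale chs =
  fixes scC :: "complex \<Rightarrow> 'a::banach \<Rightarrow> 'a" and ip :: "'a \<Rightarrow> 'a \<Rightarrow> complex"
  assumes H: "complex_hilbert scC ip"
begin

lemma scC_addL: "scC (a + b) x = scC a x + scC b x" using H unfolding complex_hilbert_def by blast
lemma scC_addR: "scC a (x + y) = scC a x + scC a y" using H unfolding complex_hilbert_def by blast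
lemma scC_mult: "scC (a * b) x = scC a (scC b x)" using H unfolding complex_hilbert_def by blast
lemma scC_real: "scC (complex_of_real r) x = scaleR r x" using H unfolding complex_hilbert_def by blast
lemma ip_addL: "ip (x + y) z = ip x z + ip y z" using H unfolding complex_hilbert_def by blast
lemma ip_scCL: "ip (scC a x) y = a * ip x y" using H unfolding complex_hilbert_def by blast
lemma ip_sym: "ip y x = cnj (ip x y)" using H unfolding complex_hilbert_def by blast
lemma ip_self: "ip x x = complex_of_real ((norm x)\<^sup>2)" using H unfolding complex_hilbert_def by blast

lemma ip_addR: "ip x (y + z) = ip x y + ip x z"
  by (metis complex_cnj_add ip_addL ip_sym)
lemma ip_scCR: "ip x (scC a y) = cnj a * ip x y"
  by (metis complex_cnj_cnj complex_cnj_mult ip_scCL ip_sym)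
lemma ip_zeroL[simp]: "ip 0 y = 0"
  using ip_addL[of 0 0 y] by simp
lemma ip_zeroR[simp]: "ip x 0 = 0"
  using ip_addR[of x 0 0] by simp
lemma ip_minusL: "ip (- x) y = - ip x y"
proof -
  have "ip x y + ip (-x) y = 0" using ip_addL[of x "-x" y] by simp
  then show ?thesis by (metis neg_eq_iff_add_eq_0)
qed
lemma ip_minusR: "ip x (- y) = - ip x y"
proof -
  have "ip x y + ip x (-y) = 0" using ip_addR[of x y "-y"] by simp
  then show ?thesis by (metis neg_eq_iff_add_eq_0)
qed
lemma ip_diffL: "ip (x - y) z = ip x z - ip y z"
  using ip_addL[of x "-y" z] ip_minusL[of y z] by simp
lemma ip_diffR: "ip x (y - z) = ip x y - ip x z"
  using ip_addR[of x y "-z"] ip_minusR[of x z] by simp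
lemma ip_scaleRL: "ip (scaleR r x) y = complex_of_real r * ip x y"
  using ip_scCL[of "complex_of_real r" x y] scC_real by simp
lemma ip_scaleRR: "ip x (scaleR r y) = complex_of_real r * ip x y"
  using ip_scCR[of x "complex_of_real r" y] scC_real by simp
lemma ip_sumL: "ip (sum f A) y = (\<Sum>i\<in>A. ip (f i) y)"
  by (induction A rule: infinite_finite_induct) (auto simp: ip_addL)
lemma ip_sumR: "ip y (sum f A) = (\<Sum>i\<in>A. ip y (f i))"
  by (induction A rule: infinite_finite_induct) (auto simp: ip_addR)

lemma norm_sq: "(norm x)\<^sup>2 = Re (ip x x)"
  by (simp add: ip_self)
lemma ip_self_zero: "ip x x = 0 \<longleftrightarrow> x = 0"
  by (simp add: ip_self)
lemma Re_ip_sym: "Re (ip y x) = Re (ip x y)"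
  by (subst ip_sym) simp

lemma norm_add_sq: "(norm (x + y))\<^sup>2 = (norm x)\<^sup>2 + (norm y)\<^sup>2 + 2 * Re (ip x y)"
  unfolding norm_sq by (simp add: ip_addL ip_addR Re_ip_sym[of x y])
lemma norm_diff_sq: "(norm (x - y))\<^sup>2 = (norm x)\<^sup>2 + (norm y)\<^sup>2 - 2 * Re (ip x y)"
  unfolding norm_sq by (simp add: ip_diffL ip_diffR Re_ip_sym[of x y])

lemma scC_zero[simp]: "scC a 0 = 0"
  using scC_addR[of a 0 0] by simp
lemma scC_one[simp]: "scC 1 x = x"
  using scC_real[of 1 x] by simp
lemma scC_zeroL[simp]: "scC 0 x = 0"
  using scC_real[of 0 x] by simp
lemma scC_minusR: "scC a (- x) = - scC a x"
proof -
  have "scC a x + scC a (-x) = 0" using scC_addR[of a x "-x"] by simp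
  then show ?thesis by (metis neg_eq_iff_add_eq_0)
qed
lemma scC_diffR: "scC a (x - y) = scC a x - scC a y"
  using scC_addR[of a x "-y"] scC_minusR[of a y] by simp
lemma scC_scaleR: "scC a (scaleR r x) = scaleR r (scC a x)"
  by (metis mult.commute scC_mult scC_real)
lemma scC_sum: "scC a (sum f A) = (\<Sum>i\<in>A. scC a (f i))"
  by (induction A rule: infinite_finite_induct) (auto simp: scC_addR)

lemma norm_scC: "norm (scC a x) = cmod a * norm x"
proof -
  have "ip (scC a x) (scC a x) = (a * cnj a) * ip x x"
    by (simp add: ip_scCL ip_scCR mult.assoc)
  then have "(norm (scC a x))\<^sup>2 = Re ((a * cnj a) * ip x x)"
    unfolding norm_sq by simp
  also have "\<dots> = (cmod a * norm x)\<^sup>2"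
    unfolding complex_mult_cnj ip_self of_real_mult[symmetric] Re_complex_of_real
    by (simp add: power_mult_distrib cmod_power2)
  finally show ?thesis
    by (simp add: power2_eq_iff_nonneg)
qed

lemma linear_scC: "linear (scC a)"
  by (rule linearI) (auto simp: scC_addR scC_scaleR)
lemma bounded_linear_scC: "bounded_linear (scC a)"
  by (rule bounded_linear_intro[where K="cmod a"]) (auto simp: scC_addR scC_scaleR norm_scC)

lemma Re_ip_le: "Re (ip x y) \<le> norm x * norm y"
proof -
  have "0 \<le> (norm (scaleR (norm y) x - scaleR (norm x) y))\<^sup>2" by simp
  also have "\<dots> = 2 * (norm x)\<^sup>2 * (norm y)\<^sup>2 - 2 * norm x * norm y * Re (ip x y)"
    unfolding norm_diff_sq by (simp add: ip_scaleRL ip_scaleRR power2_eq_square)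
  finally have A: "norm x * norm y * Re (ip x y) \<le> norm x * norm y * (norm x * norm y)"
    by (simp add: power2_eq_square algebra_simps)
  show ?thesis
  proof (cases "norm x * norm y = 0")
    case True
    then have "x = 0 \<or> y = 0" by simp
    then show ?thesis by auto
  next
    case False
    then have "norm x * norm y > 0" by simp
    with A show ?thesis by (simp add: mult_left_le_imp_le)
  qed
qed

lemma ip_le: "cmod (ip x y) \<le> norm x * norm y"
proof (cases "ip x y = 0")
  case True then show ?thesis by simp
next
  case False
  define c where "c = cnj (ip x y) / complex_of_real (cmod (ip x y))"
  have cm: "cmod c = 1" using False by (simp add: c_def norm_divide)
  have "ip (scC c x) y = c * ip x y" by (simp add: ip_scCL)
  also have "\<dots> = complex_of_real (cmod (ip x y))"
    using False by (simp add: c_def complex_norm_square[symmetric] power2_eq_square mult.commute)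
  finally have "cmod (ip x y) = Re (ip (scC c x) y)" by simp
  also have "\<dots> \<le> norm (scC c x) * norm y" by (rule Re_ip_le)
  finally show ?thesis using cm by (simp add: norm_scC)
qed

lemma bb_ip: "bounded_bilinear ip"
proof
  fix a a' b b' :: 'a and r :: real
  show "ip (a + a') b = ip a b + ip a' b" by (rule ip_addL)
  show "ip a (b + b') = ip a b + ip a b'" by (rule ip_addR)
  show "ip (scaleR r a) b = scaleR r (ip a b)" by (simp add: ip_scaleRL scaleR_conv_of_real)
  show "ip a (scaleR r b) = scaleR r (ip a b)" by (simp add: ip_scaleRR scaleR_conv_of_real)
  show "\<exists>K. \<forall>a b. norm (ip a b) \<le> norm a * norm b * K"
    by (rule exI[of _ 1]) (simp add: ip_le)
qed

lemma ip_ext: assumes "\<And>x. ip x a = ip x b" shows "a = b"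
proof -
  have "ip (a - b) (a - b) = 0" using assms[of "a-b"] by (simp add: ip_diffR)
  then show ?thesis by (simp add: ip_self_zero)
qed

end


lemma span_BW:
  fixes z :: "nat \<Rightarrow> 'a::real_normed_vector"
  assumes "finite B" "bounded (range z)" "\<And>k. z k \<in> span B"
  shows "\<exists>r l. strict_mono r \<and> l \<in> span B \<and> (z \<circ> r) \<longlonglongrightarrow> l"
  using assms
proof (induction B arbitrary: z rule: finite_induct)
  case empty
  then have "z k = 0" for k by simp
  then have "(z \<circ> id) \<longlonglongrightarrow> 0" by (simp add: o_def)
  then show ?case by (intro exI[of _ id] exI[of _ 0]) (auto simp: strict_mono_def)
next
  case (insert b B z)
  show ?case
  proof (cases "b \<in> span B")
    case True
    then have "span (insert b B) = span B" by (rule span_redundant)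
    then show ?thesis using insert.IH[of z] insert.prems by auto
  next
    case False
    have "\<forall>k. \<exists>c. z k - c *\<^sub>R b \<in> span B" using insert.prems(2) by (simp add: span_insert)
    then obtain a where a: "\<And>k. z k - a k *\<^sub>R b \<in> span B" by metis
    define w where "w k = z k - a k *\<^sub>R b" for k
    from insert.prems(1) obtain C where C: "\<And>k. norm (z k) \<le> C" unfolding bounded_iff by auto
    define \<beta> where "\<beta> k = 1 / (1 + \<bar>a k\<bar>)" for k
    have \<beta>pos: "0 < \<beta> k" "\<beta> k \<le> 1" for k by (auto simp: \<beta>_def)
    have "bounded (range \<beta>)" using \<beta>pos unfolding bounded_iff by (intro exI[of _ 1]) (smt (verit) \<beta>pos rangeE real_norm_def)
    then obtain r1 \<beta>0 where r1: "strict_mono r1" "(\<beta> \<circ> r1) \<longlonglongrightarrow> \<beta>0"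
      using bounded_imp_convergent_subsequence by blast
    have \<beta>0: "\<beta>0 \<ge> 0"
      by (rule LIMSEQ_le_const[OF r1(2)]) (auto intro: less_imp_le \<beta>pos)
    have "\<beta>0 > 0"
    proof (rule ccontr)
      assume "\<not> \<beta>0 > 0" then have b0: "\<beta>0 = 0" using \<beta>0 by simp
      define c where "c k = \<beta> k * a k" for k
      have cabs: "\<bar>c k\<bar> = 1 - \<beta> k" for k
        by (simp add: c_def \<beta>_def abs_mult field_simps)
      have "bounded (range (c \<circ> r1))"
        unfolding bounded_iff using cabs \<beta>pos by (intro exI[of _ 1]) (auto simp: less_imp_le)
      then obtain r2 \<sigma> where r2: "strict_mono r2" "(c \<circ> r1 \<circ> r2) \<longlonglongrightarrow> \<sigma>"
        using bounded_imp_convergent_subsequence by blast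
      have b12: "(\<beta> \<circ> (r1 \<circ> r2)) \<longlonglongrightarrow> 0"
        using LIMSEQ_subseq_LIMSEQ[OF r1(2) r2(1)] b0 by (simp add: o_assoc)
      have "(\<lambda>k. \<bar>(c \<circ> r1 \<circ> r2) k\<bar>) \<longlonglongrightarrow> \<bar>\<sigma>\<bar>" using r2(2) by (rule tendsto_rabs)
      moreover have "(\<lambda>k. \<bar>(c \<circ> r1 \<circ> r2) k\<bar>) = (\<lambda>k. 1 - (\<beta> \<circ> (r1 \<circ> r2)) k)"
        by (simp add: cabs)
      moreover have "(\<lambda>k. 1 - (\<beta> \<circ> (r1 \<circ> r2)) k) \<longlonglongrightarrow> 1 - 0"
        by (intro tendsto_diff tendsto_const b12)
      ultimately have "\<bar>\<sigma>\<bar> = 1" using LIMSEQ_unique by fastforce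
      then have s0: "\<sigma> \<noteq> 0" by auto
      define u where "u k = \<beta> k *\<^sub>R w k" for k
      have u_eq: "u k = \<beta> k *\<^sub>R z k - c k *\<^sub>R b" for k
        by (simp add: u_def w_def c_def scaleR_diff_right)
      have uspan: "u k \<in> span B" for k
        unfolding u_def w_def by (intro span_scale a)
      have "(\<lambda>k. \<beta> ((r1 \<circ> r2) k) *\<^sub>R z ((r1 \<circ> r2) k)) \<longlonglongrightarrow> 0"
      proof (rule Lim_null_comparison)
        show "\<forall>\<^sub>F k in sequentially. norm (\<beta> ((r1 \<circ> r2) k) *\<^sub>R z ((r1 \<circ> r2) k)) \<le> \<beta> ((r1 \<circ> r2) k) * C"
          using C \<beta>pos by (auto intro!: mult_left_mono simp: less_imp_le)
        show "(\<lambda>k. \<beta> ((r1 \<circ> r2) k) * C) \<longlonglongrightarrow> 0"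
          using tendsto_mult[OF b12 tendsto_const[of C]] by (simp add: o_def)
      qed
      then have "(\<lambda>k. \<beta> ((r1 \<circ> r2) k) *\<^sub>R z ((r1 \<circ> r2) k) - (c \<circ> r1 \<circ> r2) k *\<^sub>R b) \<longlonglongrightarrow> 0 - \<sigma> *\<^sub>R b"
        by (intro tendsto_diff tendsto_scaleR r2(2) tendsto_const)
      then have ulim: "(u \<circ> (r1 \<circ> r2)) \<longlonglongrightarrow> - \<sigma> *\<^sub>R b"
        by (simp add: u_eq o_def)
      obtain r3 l where r3: "strict_mono r3" "l \<in> span B" "(u \<circ> (r1 \<circ> r2) \<circ> r3) \<longlonglongrightarrow> l"
        using insert.IH[of "u \<circ> (r1 \<circ> r2)"] convergent_imp_bounded[OF ulim] uspan by (auto simp: o_def)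
      have "(u \<circ> (r1 \<circ> r2) \<circ> r3) \<longlonglongrightarrow> - \<sigma> *\<^sub>R b"
        using LIMSEQ_subseq_LIMSEQ[OF ulim r3(1)] .
      then have "l = - \<sigma> *\<^sub>R b" using r3(3) LIMSEQ_unique by blast
      then have "b = (- 1 / \<sigma>) *\<^sub>R l" using s0 by simp
      then have "b \<in> span B" using r3(2) span_scale by blast
      then show False using False by simp
    qed
    have aeq: "\<bar>a k\<bar> = 1 / \<beta> k - 1" for k by (simp add: \<beta>_def)
    have "(\<lambda>k. 1 / (\<beta> \<circ> r1) k - 1) \<longlonglongrightarrow> 1 / \<beta>0 - 1"
      using \<open>\<beta>0 > 0\<close> by (intro tendsto_diff tendsto_divide r1(2) tendsto_const) auto
    then have "bounded (range (\<lambda>k. 1 / (\<beta> \<circ> r1) k - 1))" by (rule convergent_imp_bounded)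
    then obtain A where A0: "\<forall>k. \<bar>1 / \<beta> (r1 k) - 1\<bar> \<le> A" unfolding bounded_iff by auto
    have A: "\<bar>a (r1 k)\<bar> \<le> A" for k using A0 aeq by (metis abs_abs)
    have "bounded (range (a \<circ> r1))" unfolding bounded_iff using A by auto
    then obtain r2 \<alpha> where r2: "strict_mono r2" "(a \<circ> r1 \<circ> r2) \<longlonglongrightarrow> \<alpha>"
      using bounded_imp_convergent_subsequence by blast
    define v where "v = w \<circ> r1 \<circ> r2"
    have "norm (v k) \<le> C + A * norm b" for k
    proof -
      have "norm (v k) \<le> norm (z (r1 (r2 k))) + norm (a (r1 (r2 k)) *\<^sub>R b)"
        unfolding v_def w_def o_def by (rule norm_triangle_ineq4)
      also have "\<dots> \<le> C + A * norm b"
        using C A by (intro add_mono) (auto intro: mult_right_mono)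
      finally show ?thesis .
    qed
    then have "bounded (range v)" unfolding bounded_iff by auto
    then obtain r3 l where r3: "strict_mono r3" "l \<in> span B" "(v \<circ> r3) \<longlonglongrightarrow> l"
      using insert.IH[of v] a unfolding v_def w_def by (auto simp: o_def)
    have "(\<lambda>k. (a \<circ> r1 \<circ> r2 \<circ> r3) k *\<^sub>R b + (v \<circ> r3) k) \<longlonglongrightarrow> \<alpha> *\<^sub>R b + l"
      by (intro tendsto_add tendsto_scaleR LIMSEQ_subseq_LIMSEQ[OF r2(2) r3(1)] tendsto_const r3(3))
    moreover have "(\<lambda>k. (a \<circ> r1 \<circ> r2 \<circ> r3) k *\<^sub>R b + (v \<circ> r3) k) = z \<circ> (r1 \<circ> r2 \<circ> r3)"
      by (auto simp: v_def w_def)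
    moreover have "\<alpha> *\<^sub>R b + l \<in> span (insert b B)"
      using r3(2) by (meson insertI1 span_add span_base span_mono span_scale subset_insertI subsetD)
    moreover have "strict_mono (r1 \<circ> r2 \<circ> r3)"
      using r1(1) r2(1) r3(1) by (intro strict_mono_o)
    ultimately show ?thesis by metis
  qed
qed



lemma fd_inj:
  fixes f :: "'a::real_vector \<Rightarrow> 'b::real_vector"
  assumes lin: "linear f" and sU: "subspace U" and inj: "inj_on f U" and fB: "finite B"
    and sub: "f ` U \<subseteq> span B"
  shows "\<exists>C. finite C \<and> U \<subseteq> span C"
proof -
  obtain D where D: "D \<subseteq> f ` U" "independent D" "f ` U \<subseteq> span D"
    by (rule maximal_independent_subset)
  have fD: "finite D" using independent_span_bound[OF fB D(2)] D(1) sub by auto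
  have "\<forall>d\<in>D. \<exists>u. u \<in> U \<and> f u = d" using D(1) by auto
  then obtain g where g: "\<And>d. d \<in> D \<Longrightarrow> g d \<in> U \<and> f (g d) = d" by metis
  define C where "C = g ` D"
  have fC: "finite C" using fD by (simp add: C_def)
  have CU: "span C \<subseteq> U" using g sU by (intro span_minimal) (auto simp: C_def)
  have fCD: "f ` C = D" using g by (force simp: C_def image_image)
  have "U \<subseteq> span C"
  proof
    fix u assume u: "u \<in> U"
    then have "f u \<in> span D" using D(3) by auto
    also have "span D = f ` span C" using span_linear_image[OF lin, of C] fCD by simp
    finally obtain u' where u': "u' \<in> span C" "f u = f u'" by auto
    then have "u = u'" using inj u CU by (auto dest: inj_onD)
    then show "u \<in> span C" using u' by simp
  qed
  then show ?thesis using fC by blast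
qed

context chs
begin

lemma adj_fd:
  assumes lE: "linear E" and lE': "linear E'" and adj: "\<And>x y. ip (E x) y = ip x (E' y)"
    and fB: "finite B" and rB: "range E \<subseteq> span B"
  shows "\<exists>C. finite C \<and> range E' \<subseteq> span C"
proof (rule fd_inj[OF lE _ _ fB])
  show "subspace (range E')" using lE' by (simp add: subspace_UNIV linear_subspace_image)
  show "E ` range E' \<subseteq> span B" using rB by auto
  show "inj_on E (range E')"
  proof (rule inj_onI)
    fix a b assume "a \<in> range E'" "b \<in> range E'" and eq: "E a = E b"
    then obtain ya yb where ab: "a = E' ya" "b = E' yb" by auto
    define d where "d = ya - yb"
    have Ed: "E' d = a - b" using ab lE' by (simp add: d_def linear_diff)
    have "E (E' d) = 0" using Ed eq lE by (simp add: linear_diff)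
    then have "ip (E' d) (E' d) = 0" using adj[of "E' d" d] by simp
    then show "a = b" using Ed by (simp add: ip_self_zero)
  qed
qed

lemma parallelogram: "(norm ((x::'a) - y))\<^sup>2 = 2 * (norm x)\<^sup>2 + 2 * (norm y)\<^sup>2 - (norm (x + y))\<^sup>2"
  unfolding norm_add_sq norm_diff_sq by simp



end

context chs begin
lemma maxim2:
  fixes D :: "'a \<Rightarrow> 'a" and M :: "'a set"
  assumes bD: "bounded_linear D" and fB: "finite B" and rB: "range D \<subseteq> span B"
    and cM: "closed M" and sM: "subspace M"
  shows "\<exists>x0\<in>M. norm x0 \<le> 1 \<and> (\<forall>y\<in>M. norm y \<le> 1 \<longrightarrow> norm (D y) \<le> norm (D x0))"
proof -
  obtain K where K: "\<And>x. norm (D x) \<le> norm x * K" "K > 0"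
    using bounded_linear.pos_bounded[OF bD] by blast
  have lD: "linear D" using bD by (rule bounded_linear.linear)
  define Y where "Y = {y \<in> M. norm y \<le> 1}"
  have 0: "0 \<in> Y" using sM by (simp add: Y_def subspace_0)
  have bdd: "bdd_above ((\<lambda>y. norm (D y)) ` Y)"
  proof (rule bdd_aboveI2)
    fix y assume "y \<in> Y"
    then have "norm y \<le> 1" by (simp add: Y_def)
    then have "norm y * K \<le> 1 * K" using K(2) by (intro mult_right_mono) auto
    then show "norm (D y) \<le> K" using K(1)[of y] by simp
  qed
  define s where "s = (SUP y\<in>Y. norm (D y))"
  have ub: "\<And>y. y \<in> Y \<Longrightarrow> norm (D y) \<le> s" unfolding s_def using bdd by (rule cSUP_upper[rotated])
  have s0: "s \<ge> 0" using ub[OF 0] linear_0[OF lD] by simp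
  have scal: "norm (D m) \<le> s * norm m" if m: "m \<in> M" for m
  proof (cases "m = 0")
    case True then show ?thesis using lD by (simp add: linear_0)
  next
    case False
    have "(1 / norm m) *\<^sub>R m \<in> Y" using m False sM by (simp add: Y_def subspace_scale)
    then have "norm (D ((1 / norm m) *\<^sub>R m)) \<le> s" by (rule ub)
    moreover have "D ((1 / norm m) *\<^sub>R m) = (1 / norm m) *\<^sub>R D m" using lD by (rule linear_scale)
    ultimately have "norm (D m) / norm m \<le> s" by simp
    then show ?thesis using False by (simp add: divide_le_eq mult.commute)
  qed
  have "\<forall>k::nat. \<exists>y\<in>Y. s - 1 / (real k + 1) < norm (D y)"
  proof
    fix k :: nat
    have "s - 1 / (real k + 1) < s" by simp
    then show "\<exists>y\<in>Y. s - 1 / (real k + 1) < norm (D y)"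
      using less_cSUP_iff[of Y "\<lambda>y. norm (D y)"] 0 bdd unfolding s_def by blast
  qed
  then obtain y where yY: "\<And>k. y k \<in> Y" and yl: "\<And>k. s - 1 / (real k + 1) < norm (D (y k))"
    by metis
  have ys: "(\<lambda>k. norm (D (y k))) \<longlonglongrightarrow> s"
  proof (rule tendsto_sandwich[of "\<lambda>k. s - 1 / (real k + 1)" _ _ "\<lambda>k. s"])
    show "\<forall>\<^sub>F n in sequentially. s - 1 / (real n + 1) \<le> norm (D (y n))"
      using yl by (intro always_eventually allI less_imp_le)
    show "\<forall>\<^sub>F n in sequentially. norm (D (y n)) \<le> s" using ub yY by (intro always_eventually allI) blast
    show "(\<lambda>k. s - 1 / (real k + 1)) \<longlonglongrightarrow> s"
      using tendsto_diff[OF tendsto_const[of s] LIMSEQ_inverse_real_of_nat] 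
      by (simp add: inverse_eq_divide add.commute)
  qed auto
  have "bounded (range (D \<circ> y))"
    unfolding bounded_iff using ub yY by (auto intro!: exI[of _ s])
  then obtain r z where r: "strict_mono r" "z \<in> span B" "(D \<circ> y \<circ> r) \<longlonglongrightarrow> z"
  proof -
    have "\<And>k. (D \<circ> y) k \<in> span B" using rB by auto
    then show ?thesis using span_BW[OF fB \<open>bounded (range (D \<circ> y))\<close>] that by blast
  qed
  have "(\<lambda>k. norm ((D \<circ> y \<circ> r) k)) \<longlonglongrightarrow> norm z" using r(3) by (rule tendsto_norm)
  moreover have "(\<lambda>k. norm ((D \<circ> y \<circ> r) k)) \<longlonglongrightarrow> s"
    using LIMSEQ_subseq_LIMSEQ[OF ys r(1)] by (simp add: o_def)
  ultimately have nz: "norm z = s" using LIMSEQ_unique by blast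
  show ?thesis
  proof (cases "s = 0")
    case True
    then show ?thesis using ub sM by (intro bexI[of _ 0]) (auto simp: Y_def subspace_0 linear_0[OF lD])
  next
    case False
    then have sp: "s > 0" using s0 by simp
    define u where "u = y \<circ> r"
    have uY: "u k \<in> M" "norm (u k) \<le> 1" for k using yY[of "r k"] by (auto simp: u_def Y_def)
    have Du: "(\<lambda>k. D (u k)) \<longlonglongrightarrow> z" using r(3) by (simp add: u_def o_def)
    have "Cauchy u"
    proof (rule metric_CauchyI)
      fix e :: real assume e: "e > 0"
      define \<eta> where "\<eta> = e\<^sup>2 * s / 16"
      have \<eta>: "\<eta> > 0" using e sp by (simp add: \<eta>_def)
      from LIMSEQ_D[OF Du \<eta>] obtain N where N: "\<And>k. k \<ge> N \<Longrightarrow> norm (D (u k) - z) < \<eta>" by blast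
      have "dist (u k) (u j) < e" if k: "k \<ge> N" and j: "j \<ge> N" for k j
      proof -
        have "2 * s = norm (2 *\<^sub>R z)" using nz by simp
        also have "\<dots> \<le> norm (D (u k) + D (u j)) + norm (D (u k) - z) + norm (D (u j) - z)"
        proof -
          have "2 *\<^sub>R z = (D (u k) + D (u j)) - (D (u k) - z) - (D (u j) - z)"
            by (simp add: scaleR_2 algebra_simps)
          then show ?thesis
            unfolding \<open>2 *\<^sub>R z = _\<close> using norm_triangle_ineq4[of "(D (u k) + D (u j)) - (D (u k) - z)" "D (u j) - z"]
              norm_triangle_ineq4[of "D (u k) + D (u j)" "D (u k) - z"] by linarith
        qed
        finally have "2 * s - 2 * \<eta> < norm (D (u k) + D (u j))" using N[OF k] N[OF j] by simp
        also have "D (u k) + D (u j) = D (u k + u j)" using lD by (simp add: linear_add)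
        also have "norm \<dots> \<le> s * norm (u k + u j)"
          using scal uY sM by (simp add: subspace_add)
        finally have "2 * s - 2 * \<eta> < s * norm (u k + u j)" .
        then have lo: "2 - 2 * \<eta> / s < norm (u k + u j)" using sp
          by (simp add: field_simps)
        have "(norm (u k - u j))\<^sup>2 = 2 * (norm (u k))\<^sup>2 + 2 * (norm (u j))\<^sup>2 - (norm (u k + u j))\<^sup>2"
          by (rule parallelogram)
        also have "\<dots> \<le> 4 - (norm (u k + u j))\<^sup>2"
        proof -
          have "(norm (u k))\<^sup>2 \<le> 1" "(norm (u j))\<^sup>2 \<le> 1"
            using uY(2)[of k] uY(2)[of j] by (simp_all add: power_le_one)
          then show ?thesis by linarith
        qed
        finally have A: "(norm (u k - u j))\<^sup>2 \<le> 4 - (norm (u k + u j))\<^sup>2" .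
        show ?thesis
        proof (cases "2 - 2 * \<eta> / s \<ge> 0")
          case True
          have "(2 - 2 * (\<eta> / s))\<^sup>2 \<le> (norm (u k + u j))\<^sup>2"
            using lo True by (intro power_mono) auto
          moreover have "(2 - 2 * (\<eta> / s))\<^sup>2 = 4 - 8 * (\<eta> / s) + 4 * (\<eta> / s)\<^sup>2"
            by (simp add: power2_eq_square algebra_simps)
          ultimately have "(norm (u k - u j))\<^sup>2 \<le> 8 * (\<eta> / s) - 4 * (\<eta> / s)\<^sup>2"
            using A by linarith
          then have "(norm (u k - u j))\<^sup>2 \<le> 8 * \<eta> / s - 4 * (\<eta> / s)\<^sup>2" by simp
          also have "\<dots> \<le> 8 * \<eta> / s" by simp
          also have "\<dots> = e\<^sup>2 / 2" using sp by (simp add: \<eta>_def)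
          also have "\<dots> < e\<^sup>2" using e by simp
          finally have "(norm (u k - u j))\<^sup>2 < e\<^sup>2" .
          then show ?thesis using e by (simp add: dist_norm power_less_imp_less_base)
        next
          case False
          then have "1 < \<eta> / s" by simp
          then have "s < \<eta>" using sp by (simp add: field_simps)
          then have "16 < e\<^sup>2" using sp by (simp add: \<eta>_def)
          have "\<not> e \<le> 4"
          proof
            assume "e \<le> 4"
            then have "e\<^sup>2 \<le> 4\<^sup>2" using e by (intro power_mono) auto
            then show False using \<open>16 < e\<^sup>2\<close> by simp
          qed
          then have "4 < e" by simp
          moreover have "dist (u k) (u j) \<le> 2"
            using uY[of k] uY[of j] norm_triangle_ineq4[of "u k" "u j"] by (simp add: dist_norm)
          ultimately show ?thesis by simp
        qed
      qed
      then show "\<exists>N. \<forall>m\<ge>N. \<forall>n\<ge>N. dist (u m) (u n) < e" by blast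
    qed
    then obtain x0 where x0: "u \<longlonglongrightarrow> x0" by (auto simp: Cauchy_convergent_iff convergent_def)
    have x0M: "x0 \<in> M" using cM uY x0 by (auto simp: closed_sequential_limits)
    have "(\<lambda>k. norm (u k)) \<longlonglongrightarrow> norm x0" using x0 by (rule tendsto_norm)
    then have x01: "norm x0 \<le> 1" by (rule LIMSEQ_le_const2) (use uY in auto)
    have "(\<lambda>k. D (u k)) \<longlonglongrightarrow> D x0" using bounded_linear.tendsto[OF bD x0] .
    then have "D x0 = z" using Du LIMSEQ_unique by blast
    then show ?thesis using x0M x01 ub nz by (auto simp: Y_def)
  qed
qed

end


lemma subspace_closure_gen:
  fixes S :: "'a::real_normed_vector set"
  assumes "subspace S" shows "subspace (closure S)"
proof -
  have add1: "x + y \<in> closure S" if "x \<in> closure S" "y \<in> S" for x y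
  proof -
    have "(\<lambda>x. x + y) ` closure S \<subseteq> closure S"
      by (rule image_closure_subset) (auto intro!: continuous_intros simp: subspace_add[OF assms] that closure_subset[THEN subsetD])
    then show ?thesis using that by auto
  qed
  have add2: "x + y \<in> closure S" if "x \<in> closure S" "y \<in> closure S" for x y
  proof -
    have "(\<lambda>y. x + y) ` closure S \<subseteq> closure S"
      by (rule image_closure_subset) (auto intro!: continuous_intros add1 that)
    then show ?thesis using that by auto
  qed
  have sc: "c *\<^sub>R x \<in> closure S" if "x \<in> closure S" for c x
  proof -
    have "(\<lambda>x. c *\<^sub>R x) ` closure S \<subseteq> closure S"
      by (rule image_closure_subset) (auto intro!: continuous_intros simp: subspace_scale[OF assms] closure_subset[THEN subsetD])
    then show ?thesis using that by auto
  qed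
  show ?thesis unfolding subspace_def
    using add2 sc closure_subset subspace_0[OF assms] by blast
qed

lemma ext_closure:
  fixes f g :: "'a::real_normed_vector \<Rightarrow> 'b::real_normed_vector"
  assumes f: "bounded_linear f" and g: "bounded_linear g" and eq: "\<And>x. x \<in> S \<Longrightarrow> f x = g x"
    and x: "x \<in> closure (span S)"
  shows "f x = g x"
proof -
  have lf: "linear f" and lg: "linear g" using f g by (auto dest: bounded_linear.linear)
  have sZ: "subspace {x. f x = g x}"
    unfolding subspace_def using lf lg by (auto simp: linear_0 linear_add linear_scale)
  have cZ: "closed {x. f x = g x}"
    by (intro closed_Collect_eq linear_continuous_on f g)
  have "span S \<subseteq> {x. f x = g x}" using eq by (intro span_minimal sZ) auto
  then have "closure (span S) \<subseteq> {x. f x = g x}" using cZ by (rule closure_minimal)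
  then show ?thesis using x by auto
qed

definition fdim :: "'a::real_vector set \<Rightarrow> bool" where
  "fdim V \<longleftrightarrow> (\<exists>B. finite B \<and> V \<subseteq> span B)"

context chs begin

definition csub :: "'a set \<Rightarrow> bool" where
  "csub V \<longleftrightarrow> 0 \<in> V \<and> (\<forall>x\<in>V. \<forall>y\<in>V. x + y \<in> V) \<and> (\<forall>c. \<forall>x\<in>V. scC c x \<in> V)"

lemma scC_span2: "scC c v = Re c *\<^sub>R v + Im c *\<^sub>R scC \<i> v"
proof -
  have ceq: "c = complex_of_real (Re c) + complex_of_real (Im c) * \<i>"
    by (simp add: complex_eq_iff)
  have "scC c v = scC (complex_of_real (Re c) + complex_of_real (Im c) * \<i>) v"
    using ceq by (rule arg_cong)
  also have "\<dots> = Re c *\<^sub>R v + Im c *\<^sub>R scC \<i> v"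
    by (simp add: scC_addL scC_mult scC_real)
  finally show ?thesis .
qed

lemma csub_diff: assumes "csub V" "x \<in> V" "y \<in> V" shows "x - y \<in> V"
proof -
  have "scC (-1) y = - y" using scC_real[of "-1" y] by simp
  then have "x - y = x + scC (-1) y" by simp
  then show ?thesis using assms unfolding csub_def by metis
qed

lemma avoid_fd:
  assumes V: "csub V" and nf: "\<not> fdim V" and F: "finite F"
  shows "\<not> fdim {v\<in>V. \<forall>f\<in>F. ip v f = 0}"
  using F
proof (induction F rule: finite_induct)
  case empty then show ?case using nf by (simp del: )
next
  case (insert g F)
  define V' where "V' = {v\<in>V. \<forall>f\<in>F. ip v f = 0}"
  have cV': "csub V'" using V unfolding csub_def V'_def
    by (auto simp: ip_addL ip_scCL)
  have eq: "{v\<in>V. \<forall>f\<in>insert g F. ip v f = 0} = {v\<in>V'. ip v g = 0}"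
    by (auto simp: V'_def)
  show ?case
  proof
    assume "fdim {v\<in>V. \<forall>f\<in>insert g F. ip v f = 0}"
    then obtain B where B: "finite B" "{v\<in>V'. ip v g = 0} \<subseteq> span B"
      unfolding eq fdim_def by blast
    show False
    proof (cases "\<forall>v\<in>V'. ip v g = 0")
      case True
      then have "V' \<subseteq> span B" using B by auto
      then have "fdim V'" using B(1) unfolding fdim_def by blast
      then show False using insert.IH unfolding V'_def by simp
    next
      case False
      then obtain v0 where v0: "v0 \<in> V'" "ip v0 g \<noteq> 0" by blast
      have "V' \<subseteq> span (B \<union> {v0, scC \<i> v0})"
      proof
        fix v assume v: "v \<in> V'"
        define c where "c = ip v g / ip v0 g"
        have "v - scC c v0 \<in> V'" using cV' v v0 by (intro csub_diff) (auto simp: csub_def)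
        moreover have "ip (v - scC c v0) g = 0" using v0 by (simp add: ip_diffL ip_scCL c_def)
        ultimately have "v - scC c v0 \<in> span B" using B by auto
        then have A: "v - scC c v0 \<in> span (B \<union> {v0, scC \<i> v0})" by (rule span_mono[THEN subsetD, rotated]) auto
        have "scC c v0 \<in> span (B \<union> {v0, scC \<i> v0})"
          unfolding scC_span2[of c v0] by (intro span_add span_scale span_base) auto
        from span_add[OF A this] show "v \<in> span (B \<union> {v0, scC \<i> v0})" by simp
      qed
      then have "fdim V'" using B(1) unfolding fdim_def by (intro exI[of _ "B \<union> {v0, scC \<i> v0}"]) simp
      then show False using insert.IH unfolding V'_def by simp
    qed
  qed
qed

lemma avoid:
  assumes V: "csub V" and nf: "\<not> fdim V" and F: "finite F"
  shows "\<exists>v\<in>V. norm v = 1 \<and> (\<forall>f\<in>F. ip v f = 0)"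
proof -
  have "\<exists>v\<in>{v\<in>V. \<forall>f\<in>F. ip v f = 0}. v \<noteq> 0"
  proof (rule ccontr)
    assume "\<not> ?thesis"
    then have "{v\<in>V. \<forall>f\<in>F. ip v f = 0} \<subseteq> span {}" by auto
    then show False using avoid_fd[OF V nf F] unfolding fdim_def by blast
  qed
  then obtain v where v: "v \<in> V" "\<forall>f\<in>F. ip v f = 0" "v \<noteq> 0" by blast
  define u where "u = scC (complex_of_real (1 / norm v)) v"
  have "u \<in> V" using V v by (simp add: csub_def u_def)
  moreover have "norm u = 1" using v unfolding u_def scC_real by simp
  moreover have "\<forall>f\<in>F. ip u f = 0" using v by (simp add: u_def ip_scCL)
  ultimately show ?thesis by blast
qed

end



context chs begin
definition pickv :: "'a set \<Rightarrow> 'a set \<Rightarrow> 'a" where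
  "pickv V F = (SOME v. v \<in> V \<and> norm v = 1 \<and> (\<forall>f\<in>F. ip v f = 0))"

lemma pickv:
  assumes "csub V" "\<not> fdim V" "finite F"
  shows "pickv V F \<in> V \<and> norm (pickv V F) = 1 \<and> (\<forall>f\<in>F. ip (pickv V F) f = 0)"
  unfolding pickv_def by (rule someI_ex) (use avoid[OF assms] in blast)
end

locale idem = chs +
  fixes T Tadj :: "'a \<Rightarrow> 'a"
  assumes bT: "bounded_clinear_op scC T" and TT: "T \<circ> T = T" and adjT: "is_adjoint ip T Tadj"
begin

lemma blT: "bounded_linear T" using bT by (simp add: bounded_clinear_op_def)
lemma lT: "linear T" using blT by (rule bounded_linear.linear)
lemma T_scC: "T (scC c x) = scC c (T x)" using bT by (simp add: bounded_clinear_op_def)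
lemma TTx: "T (T x) = T x" using fun_cong[OF TT, of x] by simp
lemma adj: "ip (T x) y = ip x (Tadj y)" using adjT by (simp add: is_adjoint_def)
lemma T0: "T 0 = 0" using lT by (rule linear_0)
lemma T_add: "T (x + y) = T x + T y" using lT by (rule linear_add)
lemma T_diff: "T (x - y) = T x - T y" using lT by (rule linear_diff)
lemma T_scaleR: "T (r *\<^sub>R x) = r *\<^sub>R T x" using lT by (rule linear_scale)

lemma Tadj_add: "Tadj (x + y) = Tadj x + Tadj y"
  by (rule ip_ext) (simp add: adj[symmetric] ip_addR)
lemma Tadj_scaleR: "Tadj (r *\<^sub>R x) = r *\<^sub>R Tadj x"
  by (rule ip_ext) (simp add: adj[symmetric] ip_scaleRR)
lemma lTadj: "linear Tadj"
  by (rule linearI) (simp_all add: Tadj_add Tadj_scaleR)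

lemma blTadj: "bounded_linear Tadj"
proof -
  obtain K where K: "\<And>x. norm (T x) \<le> norm x * K" "K > 0"
    using bounded_linear.pos_bounded[OF blT] by blast
  have "norm (Tadj y) \<le> norm y * K" for y
  proof (cases "Tadj y = 0")
    case True then show ?thesis using K by simp
  next
    case False
    have "(norm (Tadj y))\<^sup>2 = Re (ip (T (Tadj y)) y)" unfolding norm_sq adj ..
    also have "\<dots> \<le> norm (T (Tadj y)) * norm y" by (rule Re_ip_le)
    also have "\<dots> \<le> norm (Tadj y) * K * norm y" using K(1) by (intro mult_right_mono) auto
    finally have "norm (Tadj y) * norm (Tadj y) \<le> norm (Tadj y) * (norm y * K)"
      by (simp add: power2_eq_square mult_ac)
    then show ?thesis using False by simp
  qed
  then show ?thesis using lTadj
    by (intro bounded_linear_intro[where K=K]) (auto simp: linear_add linear_scale)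
qed

lemma S_identity:
  "(norm (T x + Tadj x - x))\<^sup>2 = (norm x)\<^sup>2 + (norm (T x - Tadj x))\<^sup>2"
proof -
  define a b where "a = T x" and "b = Tadj x"
  have ax: "Re (ip a x) = Re (ip a b)" unfolding a_def b_def adj[symmetric] TTx ..
  have bx: "Re (ip b x) = Re (ip a x)"
    unfolding a_def b_def by (subst ip_sym) (simp add: adj)
  have "(norm (a + b - x))\<^sup>2 = (norm (a + b))\<^sup>2 + (norm x)\<^sup>2 - 2 * Re (ip (a + b) x)"
    by (rule norm_diff_sq)
  also have "\<dots> = (norm a)\<^sup>2 + (norm b)\<^sup>2 + 2 * Re (ip a b) + (norm x)\<^sup>2 - 2 * (Re (ip a x) + Re (ip b x))"
    by (simp add: norm_add_sq ip_addL)
  also have "\<dots> = (norm x)\<^sup>2 + (norm (a - b))\<^sup>2"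
    by (simp add: norm_diff_sq ax bx)
  finally show ?thesis by (simp add: a_def b_def)
qed

lemma csub_R: "csub (range T)"
proof -
  have "0 \<in> range T" using T0 by (metis rangeI)
  moreover have "T x + T y \<in> range T" for x y using T_add[of x y] by (metis rangeI)
  moreover have "scC c (T x) \<in> range T" for c x using T_scC[of c x] by (metis rangeI)
  ultimately show ?thesis unfolding csub_def by auto
qed

lemma csub_K: "csub {x. T x = 0}"
  unfolding csub_def by (auto simp: T0 T_add T_scC)

primrec hist :: "nat \<Rightarrow> 'a set" where
  "hist 0 = {}"
| "hist (Suc n) = insert (pickv {x. T x = 0} (insert (pickv (range T) (hist n)) (hist n)))
      (insert (pickv (range T) (hist n)) (hist n))"

definition Pn :: "nat \<Rightarrow> 'a" where "Pn n = pickv (range T) (hist n)"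
definition Qn :: "nat \<Rightarrow> 'a" where "Qn n = pickv {x. T x = 0} (insert (Pn n) (hist n))"

lemma hist_Suc: "hist (Suc n) = insert (Qn n) (insert (Pn n) (hist n))"
  by (simp add: Pn_def Qn_def)
declare hist.simps(2)[simp del]

lemma finite_hist: "finite (hist n)"
  by (induction n) (simp_all add: hist_Suc)

lemma hist_mono: "m \<le> n \<Longrightarrow> hist m \<subseteq> hist n"
  by (induction n) (auto simp: hist_Suc le_Suc_eq)

lemma PQ_hist: "m < n \<Longrightarrow> Pn m \<in> hist n \<and> Qn m \<in> hist n"
  using hist_mono[of "Suc m" n] by (auto simp: hist_Suc)

end

locale idem2 = idem +
  assumes nR: "\<not> fdim (range T)" and nK: "\<not> fdim {x. T x = 0}"
begin

lemma P_props: "Pn n \<in> range T" "norm (Pn n) = 1" "\<And>f. f \<in> hist n \<Longrightarrow> ip (Pn n) f = 0"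
  using pickv[OF csub_R nR finite_hist[of n]] unfolding Pn_def by auto

lemma Q_props: "T (Qn n) = 0" "norm (Qn n) = 1" "\<And>f. f \<in> hist n \<Longrightarrow> ip (Qn n) f = 0"
  "ip (Qn n) (Pn n) = 0"
  using pickv[OF csub_K nK finite_insert[THEN iffD2, OF finite_hist[of n]], of "Pn n"]
  unfolding Qn_def by auto

lemma TP: "T (Pn n) = Pn n" using P_props(1)[of n] TTx by auto

lemma self1: "norm v = 1 \<Longrightarrow> ip v v = 1" by (simp add: ip_self)

lemma oPP: "ip (Pn n) (Pn m) = (if n = m then 1 else 0)"
proof -
  consider "n = m" | "m < n" | "n < m" by linarith
  then show ?thesis
  proof cases
    case 1 then show ?thesis using P_props(2) self1 by simp
  next
    case 2 then show ?thesis using PQ_hist P_props(3) by auto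
  next
    case 3 then have "ip (Pn m) (Pn n) = 0" using PQ_hist P_props(3) by auto
    then show ?thesis using 3 by (subst ip_sym) simp
  qed
qed

lemma oQQ: "ip (Qn n) (Qn m) = (if n = m then 1 else 0)"
proof -
  consider "n = m" | "m < n" | "n < m" by linarith
  then show ?thesis
  proof cases
    case 1 then show ?thesis using Q_props(2) self1 by simp
  next
    case 2 then show ?thesis using PQ_hist Q_props(3) by auto
  next
    case 3 then have "ip (Qn m) (Qn n) = 0" using PQ_hist Q_props(3) by auto
    then show ?thesis using 3 by (subst ip_sym) simp
  qed
qed

lemma oPQ: "ip (Pn n) (Qn m) = 0"
proof (cases "m < n")
  case True then show ?thesis using PQ_hist P_props(3) by auto
next
  case False
  then have "ip (Qn m) (Pn n) = 0"
    using PQ_hist[of n m] Q_props(3,4) by (cases "n = m") auto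
  then show ?thesis by (subst ip_sym) simp
qed

end


context idem2 begin

definition tn :: "nat \<Rightarrow> real" where "tn n = 1 / (real n + 1)"
definition wn :: "nat \<Rightarrow> 'a" where "wn n = Pn n + tn n *\<^sub>R Qn n"
definition WW :: "'a set" where "WW = range (\<lambda>(a, k). scC a (wn k))"
definition MM :: "'a set" where "MM = closure (span WW)"

lemma tn_pos: "tn n > 0" by (simp add: tn_def)

lemma Tw: "T (wn n) = Pn n" by (simp add: wn_def T_add T_scaleR TP Q_props(1))

lemma WW_cases: assumes "g \<in> WW" obtains a k where "g = scC a (wn k)"
  using assms unfolding WW_def by auto

lemma Tg: "T (scC a (wn k)) = scC a (Pn k)" by (simp add: T_scC Tw)
lemma gTg: "scC a (wn k) - T (scC a (wn k)) = scC a (tn k *\<^sub>R Qn k)"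
  unfolding Tg by (simp add: wn_def scC_addR)

lemma bl_ipL: "bounded_linear (\<lambda>x. ip x y)" using bb_ip by (rule bounded_bilinear.bounded_linear_left)
lemma bl_ipR: "bounded_linear (\<lambda>y. ip x y)" using bb_ip by (rule bounded_bilinear.bounded_linear_right)
lemma bl_IT: "bounded_linear (\<lambda>x. x - T x)"
  by (intro bounded_linear_sub bounded_linear_ident blT)

lemma wn_MM: "scC a (wn k) \<in> MM"
  unfolding MM_def WW_def by (rule closure_subset[THEN subsetD], rule span_base) auto

lemma gen_c: assumes hx: "x \<in> WW" and hy: "y \<in> WW" shows "ip (T x) (y - T y) = 0"
proof -
  obtain a k where x: "x = scC a (wn k)" using hx by (rule WW_cases)
  obtain b j where y: "y = scC b (wn j)" using hy by (rule WW_cases)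
  show ?thesis unfolding x y gTg unfolding Tg by (simp add: ip_scCL ip_scCR ip_scaleRR oPQ)
qed

lemma prop_c: "ip (T x) (y - T y) = 0" if "x \<in> MM" "y \<in> MM" for x y
proof -
  have 1: "ip (T x) (y - T y) = 0" if "x \<in> WW" "y \<in> MM" for x y
    using ext_closure[of "\<lambda>y. ip (T x) (y - T y)" "\<lambda>y. 0" WW y] that gen_c
    by (auto simp: MM_def intro: bounded_linear_compose[OF bl_ipR bl_IT] bounded_linear_zero)
  show ?thesis
    using ext_closure[of "\<lambda>x. ip (T x) (y - T y)" "\<lambda>x. 0" WW x] that 1
    by (auto simp: MM_def intro: bounded_linear_compose[OF bl_ipL blT] bounded_linear_zero)
qed

lemma norm_split: "(norm x)\<^sup>2 = (norm (T x))\<^sup>2 + (norm (x - T x))\<^sup>2" if "x \<in> MM" for x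
proof -
  have "(norm x)\<^sup>2 = (norm (T x + (x - T x)))\<^sup>2" by simp
  also have "\<dots> = (norm (T x))\<^sup>2 + (norm (x - T x))\<^sup>2 + 2 * Re (ip (T x) (x - T x))"
    by (rule norm_add_sq)
  finally show ?thesis using prop_c[OF that that] by simp
qed

lemma prop_d: "ip (x - T x) (Qn n) = complex_of_real (tn n) * ip (T x) (Pn n)" if "x \<in> MM" for x
proof (rule ext_closure[of "\<lambda>x. ip (x - T x) (Qn n)" "\<lambda>x. complex_of_real (tn n) * ip (T x) (Pn n)" WW])
  show "bounded_linear (\<lambda>x. ip (x - T x) (Qn n))"
    by (rule bounded_linear_compose[OF bl_ipL bl_IT])
  show "bounded_linear (\<lambda>x. complex_of_real (tn n) * ip (T x) (Pn n))"
    by (rule bounded_linear_compose[OF bounded_linear_mult_right bounded_linear_compose[OF bl_ipL blT]])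
  show "x \<in> closure (span WW)" using that by (simp add: MM_def)
  fix g assume "g \<in> WW"
  then obtain a k where g: "g = scC a (wn k)" by (rule WW_cases)
  show "ip (g - T g) (Qn n) = complex_of_real (tn n) * ip (T g) (Pn n)"
    unfolding g gTg unfolding Tg by (simp add: ip_scCL ip_scaleRL oQQ oPP)
qed

lemma prop_e: "ip a (T z) = 0" if "\<And>n. ip a (Pn n) = 0" "z \<in> MM" for a z
proof (rule ext_closure[of "\<lambda>z. ip a (T z)" "\<lambda>z. 0" WW])
  show "bounded_linear (\<lambda>z. ip a (T z))" by (rule bounded_linear_compose[OF bl_ipR blT])
  show "bounded_linear (\<lambda>z::'a. 0::complex)" by (rule bounded_linear_zero)
  show "z \<in> closure (span WW)" using that by (simp add: MM_def)
  fix g assume "g \<in> WW"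
  then obtain b k where g: "g = scC b (wn k)" by (rule WW_cases)
  show "ip a (T g) = 0" unfolding g Tg by (simp add: ip_scCR that(1))
qed

lemma MM_csub: "closed_csubspace scC MM"
proof -
  have sW: "subspace (span WW)" by (rule subspace_span)
  have sM: "subspace MM" unfolding MM_def by (rule subspace_closure_gen[OF sW])
  have "scC c x \<in> MM" if "x \<in> MM" for c x
  proof -
    have "scC c ` WW \<subseteq> WW"
    proof
      fix y assume "y \<in> scC c ` WW"
      then obtain a k where "y = scC c (scC a (wn k))" by (auto simp: WW_def)
      then have "y = scC (c * a) (wn k)" by (simp add: scC_mult)
      then show "y \<in> WW" by (auto simp: WW_def)
    qed
    then have "scC c ` span WW \<subseteq> span WW"
    proof -
      have "scC c ` span WW = span (scC c ` WW)" using span_linear_image[OF linear_scC, of c WW] by simp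
      also have "\<dots> \<subseteq> span WW" using \<open>scC c ` WW \<subseteq> WW\<close> by (rule span_mono)
      finally show ?thesis .
    qed
    then have "scC c ` span WW \<subseteq> MM" unfolding MM_def using closure_subset by blast
    then have "scC c ` closure (span WW) \<subseteq> MM"
      by (intro image_closure_subset linear_continuous_on bounded_linear_scC) (auto simp: MM_def)
    then show ?thesis using that by (auto simp: MM_def)
  qed
  then show ?thesis unfolding closed_csubspace_def
    using sM by (auto simp: MM_def subspace_def)
qed

lemma MM_sub: "subspace MM"
  unfolding MM_def by (rule subspace_closure_gen[OF subspace_span])

lemma norm_wn: "norm (wn n) \<le> 1 + tn n"
proof -
  have "norm (wn n) \<le> norm (Pn n) + norm (tn n *\<^sub>R Qn n)" unfolding wn_def by (rule norm_triangle_ineq)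
  then show ?thesis using P_props(2) Q_props(2) tn_pos[of n] by simp
qed

lemma TleM: "norm (T x) \<le> norm x" if "x \<in> MM" for x
proof -
  have "(norm (T x))\<^sup>2 \<le> (norm x)\<^sup>2" using norm_split[OF that] by simp
  then show ?thesis by (rule power2_le_imp_le) simp
qed

lemma restr_MM: "restr_norm T MM = 1"
proof -
  define Y where "Y = {x \<in> MM. norm x \<le> 1}"
  have 0: "0 \<in> Y" using MM_sub by (simp add: Y_def subspace_0)
  have le1: "\<And>x. x \<in> Y \<Longrightarrow> norm (T x) \<le> 1"
    unfolding Y_def using TleM order_trans by blast
  have bdd: "bdd_above ((\<lambda>x. norm (T x)) ` Y)" using le1 by (intro bdd_aboveI2) auto
  have s_le: "(SUP x\<in>Y. norm (T x)) \<le> 1" using 0 le1 by (intro cSUP_least) auto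
  have low: "1 / (1 + tn n) \<le> (SUP x\<in>Y. norm (T x))" for n
  proof -
    have wn0: "wn n \<noteq> 0" using Tw[of n] P_props(2)[of n] T0 by auto
    define x where "x = (1 / norm (wn n)) *\<^sub>R wn n"
    have "wn n \<in> MM" using wn_MM[of 1 n] by simp
    then have "x \<in> MM" unfolding x_def using MM_sub by (simp add: subspace_scale)
    moreover have "norm x = 1" using wn0 by (simp add: x_def)
    ultimately have xY: "x \<in> Y" by (simp add: Y_def)
    have "norm (T x) = 1 / norm (wn n)" using P_props(2)[of n]
      by (simp add: x_def T_scaleR Tw)
    also have "\<dots> \<ge> 1 / (1 + tn n)"
      using norm_wn[of n] wn0 tn_pos[of n] by (intro divide_left_mono) auto
    finally have "1 / (1 + tn n) \<le> norm (T x)" .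
    also have "\<dots> \<le> (SUP x\<in>Y. norm (T x))" using bdd xY by (rule cSUP_upper[rotated])
    finally show ?thesis .
  qed
  have "(SUP x\<in>Y. norm (T x)) \<ge> 1"
  proof (rule ccontr)
    assume "\<not> ?thesis"
    then have "0 < 1 - (SUP x\<in>Y. norm (T x))" by simp
    then obtain n where n: "inverse (real (Suc n)) < 1 - (SUP x\<in>Y. norm (T x))"
      using reals_Archimedean by blast
    have "1 / (1 + tn n) = 1 - 1 / (real n + 2)"
      by (simp add: tn_def field_simps)
    also have "1 / (real n + 2) \<le> inverse (real (Suc n))"
      by (simp add: inverse_eq_divide divide_left_mono)
    then have "1 - inverse (real (Suc n)) \<le> 1 - 1 / (real n + 2)" by simp
    with n low[of n] \<open>1 / (1 + tn n) = 1 - 1 / (real n + 2)\<close> show False by linarith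
  qed
  then show ?thesis using s_le unfolding restr_norm_def Y_def by simp
qed

lemma not_AN: "\<not> abs_norm_attaining scC T"
proof
  assume AN: "abs_norm_attaining scC T"
  have "wn 0 \<in> MM" using wn_MM[of 1 0] by simp
  moreover have "wn 0 \<noteq> 0" using Tw[of 0] P_props(2)[of 0] T0 by auto
  ultimately have "MM \<noteq> {0}" by auto
  then have "norm_attaining_on T MM" using AN MM_csub unfolding abs_norm_attaining_def by blast
  then obtain x where x: "x \<in> MM" "norm x = 1" "norm (T x) = 1"
    unfolding norm_attaining_on_def restr_MM by blast
  have "(norm (x - T x))\<^sup>2 = 0" using norm_split[OF x(1)] x(2,3) by simp
  then have xT: "T x = x" by simp
  have "ip (T x) (Pn n) = 0" for n
    using prop_d[OF x(1), of n] tn_pos[of n] xT by simp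
  then have "ip (T x) (T x) = 0" using prop_e x(1) by blast
  then have "x = 0" using xT by (simp add: ip_self_zero)
  then show False using x(2) by simp
qed

end

context idem begin
lemma fd_dichotomy:
  assumes "abs_norm_attaining scC T"
  shows "fdim (range T) \<or> fdim {x. T x = 0}"
proof (rule ccontr)
  assume "\<not> ?thesis"
  then interpret idem2 scC ip T Tadj by unfold_locales auto
  show False using not_AN assms by blast
qed
end



context idem begin

lemma D_fd:
  assumes "abs_norm_attaining scC T"
  shows "\<exists>B. finite B \<and> range (\<lambda>x. T x - Tadj x) \<subseteq> span B"
  using fd_dichotomy[OF assms]
proof
  assume "fdim (range T)"
  then obtain B where B: "finite B" "range T \<subseteq> span B" unfolding fdim_def by blast
  obtain C where C: "finite C" "range Tadj \<subseteq> span C"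
    using adj_fd[OF lT lTadj adj B] by blast
  have "range (\<lambda>x. T x - Tadj x) \<subseteq> span (B \<union> C)"
  proof
    fix y assume "y \<in> range (\<lambda>x. T x - Tadj x)"
    then obtain x where y: "y = T x - Tadj x" by auto
    have "T x \<in> span (B \<union> C)" using B(2) span_mono[of B "B \<union> C"] by auto
    moreover have "Tadj x \<in> span (B \<union> C)" using C(2) span_mono[of C "B \<union> C"] by auto
    ultimately show "y \<in> span (B \<union> C)" unfolding y by (rule span_diff)
  qed
  then show ?thesis using B(1) C(1) by blast
next
  assume "fdim {x. T x = 0}"
  then obtain B where B: "finite B" "{x. T x = 0} \<subseteq> span B" unfolding fdim_def by blast
  have lE: "linear (\<lambda>x. x - T x)" by (rule linear_compose_sub[OF _ lT]) (simp add: linear_iff)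
  have lE': "linear (\<lambda>x. x - Tadj x)" by (rule linear_compose_sub[OF _ lTadj]) (simp add: linear_iff)
  have adjE: "ip (x - T x) y = ip x (y - Tadj y)" for x y
    by (simp add: ip_diffL ip_diffR adj)
  have "range (\<lambda>x. x - T x) \<subseteq> span B" using B(2) by (auto simp: T_diff TTx)
  then obtain C where C: "finite C" "range (\<lambda>x. x - Tadj x) \<subseteq> span C"
    using adj_fd[OF lE lE' adjE B(1)] by blast
  have "range (\<lambda>x. T x - Tadj x) \<subseteq> span (B \<union> C)"
  proof
    fix y assume "y \<in> range (\<lambda>x. T x - Tadj x)"
    then obtain x where y: "y = T x - Tadj x" by auto
    have "x - Tadj x \<in> span (B \<union> C)" using C(2) span_mono[of C "B \<union> C"] by auto
    moreover have "x - T x \<in> span (B \<union> C)" using \<open>range (\<lambda>x. x - T x) \<subseteq> span B\<close> span_mono[of B "B \<union> C"] by auto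
    ultimately have "(x - Tadj x) - (x - T x) \<in> span (B \<union> C)" by (rule span_diff)
    then show "y \<in> span (B \<union> C)" unfolding y by simp
  qed
  then show ?thesis using B(1) C(1) by blast
qed

lemma S_AN:
  assumes AN: "abs_norm_attaining scC T"
  shows "abs_norm_attaining scC (\<lambda>x. T x + Tadj x - x)"
  unfolding abs_norm_attaining_def
proof (intro allI impI)
  fix M assume "closed_csubspace scC M \<and> M \<noteq> {0}"
  then have cM: "closed_csubspace scC M" and M0: "M \<noteq> {0}" by auto
  have sM: "subspace M" unfolding subspace_def using cM
    by (auto simp: closed_csubspace_def scC_real[symmetric])
  have clM: "closed M" using cM by (simp add: closed_csubspace_def)
  define D where "D x = T x - Tadj x" for x
  have bD: "bounded_linear D" unfolding D_def by (intro bounded_linear_sub blT blTadj)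
  obtain B where B: "finite B" "range D \<subseteq> span B" using D_fd[OF AN] unfolding D_def by blast
  obtain x0 where x0: "x0 \<in> M" "norm x0 \<le> 1" "\<And>y. y \<in> M \<Longrightarrow> norm y \<le> 1 \<Longrightarrow> norm (D y) \<le> norm (D x0)"
    using maxim2[OF bD B clM sM] by blast
  have D0: "D 0 = 0" using bD by (simp add: linear_0 bounded_linear.linear)
  obtain u where u: "u \<in> M" "norm u = 1" "\<And>y. y \<in> M \<Longrightarrow> norm y \<le> 1 \<Longrightarrow> norm (D y) \<le> norm (D u)"
  proof (cases "D x0 = 0")
    case True
    obtain m where m: "m \<in> M" "m \<noteq> 0" using M0 sM subspace_0 by blast
    define u where "u = (1 / norm m) *\<^sub>R m"
    have "u \<in> M" using m sM by (simp add: u_def subspace_scale)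
    moreover have "norm u = 1" using m by (simp add: u_def)
    moreover have "norm (D y) \<le> norm (D u)" if "y \<in> M" "norm y \<le> 1" for y
      using x0(3)[OF that] True by simp
    ultimately show ?thesis by (rule that)
  next
    case False
    then have x00: "x0 \<noteq> 0" using D0 by auto
    define u where "u = (1 / norm x0) *\<^sub>R x0"
    have uM: "u \<in> M" using x0 sM by (simp add: u_def subspace_scale)
    moreover have nu: "norm u = 1" using x00 by (simp add: u_def)
    moreover have "norm (D y) \<le> norm (D u)" if "y \<in> M" "norm y \<le> 1" for y
    proof -
      have "norm (D u) = norm (D x0) / norm x0"
        using bD by (simp add: u_def linear_scale bounded_linear.linear)
      also have "\<dots> \<ge> norm (D x0)" using x0(2) x00
        by (simp add: le_divide_eq mult_left_le)
      finally show ?thesis using x0(3)[OF that] by simp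
    qed
    ultimately show ?thesis by (rule that)
  qed
  define S where "S x = T x + Tadj x - x" for x
  have S_le: "norm (S y) \<le> norm (S u)" if "y \<in> M" "norm y \<le> 1" for y
  proof -
    have "(norm (S y))\<^sup>2 = (norm y)\<^sup>2 + (norm (D y))\<^sup>2" unfolding S_def D_def by (rule S_identity)
    also have "\<dots> \<le> 1 + (norm (D u))\<^sup>2"
      using that u(3)[OF that] by (intro add_mono power_mono) (auto simp: power_le_one)
    also have "\<dots> = (norm (S u))\<^sup>2" unfolding S_def D_def S_identity u(2)[unfolded D_def] using u(2) by simp
    finally show ?thesis by (rule power2_le_imp_le) simp
  qed
  have "restr_norm S M = norm (S u)"
    unfolding restr_norm_def
    by (rule cSup_eq_maximum) (use u S_le in auto)
  then show "norm_attaining_on (\<lambda>x. T x + Tadj x - x) M"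
    unfolding norm_attaining_on_def S_def[abs_def] using u by auto
qed

end


theorem theorem6p2:
  fixes scC :: "complex \<Rightarrow> 'a::banach \<Rightarrow> 'a"
    and ip :: "'a \<Rightarrow> 'a \<Rightarrow> complex"
    and T Tadj :: "'a \<Rightarrow> 'a"
  assumes "complex_hilbert scC ip"
    and "separable_type TYPE('a)"
    and "infinite_dim_complex scC"
    and "bounded_clinear_op scC T"
    and "T \<circ> T = T"
    and "is_adjoint ip T Tadj"
    and "abs_norm_attaining scC T"
  shows "abs_norm_attaining scC (\<lambda>x. T x + Tadj x - x)"
proof -
  interpret idem scC ip T Tadj
    by unfold_locales (use assms in auto)
  show ?thesis using S_AN assms(7) .
qed

end
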